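(* Let $T=\sum_{\lambda\in\Lambda}c_\lambda U_\lambda\in\mathcal{A}$, $\Lambda=\mathrm{supp}(c)$. For $\rho>0$ let $X_\rho=L^{2,\infty}(\mathbb{R}^d\times E_\rho(0))$. (1) If $\Lambda\subset\mathbb{R}^d\times E_\Omega(0)$ for some $\Omega>0$, then for every $\rho>0$, $T$ extends to a bounded operator $\mathbf{T}$ on $X_\rho$ with $\|\mathbf{T}\|_{B(X_\rho)}\le Ce^{\rho\Omega}$, where $C=\|T\|_{\mathcal{A}}$. (2) Conversely, if $T$ extends to a bounded operator $\mathbf{T}$ on $X_\rho$ for all $\rho>0$ with $\|\mathbf{T}\|_{B(X_\rho)}\le Ce^{\rho\Omega}$ for some $C>0$, $\Omega>0$ independent of $\rho$, then $\Lambda\subset\mathbb{R}^d\times E_\Omega(0)$. (3) If $\Lambda\subset E_D(0)\times\mathbb{R}^d$ for some $D>0$, then for every $\rho>0$ the operator $S=\mathcal{F}^*T\mathcal{F}$ extends to a bounded operator $\mathbf{S}$ on $X_\rho$ with $\|\mathbf{S}\|_{B(X_\rho)}\le Ce^{\rho D}$, where $C=\|T\|_{\mathcal{A}}$. (4) Conversely, if $S=\mathcal{F}^*T\mathcal{F}$ extends to a bounded operator $\mathbf{S}$ on $X_\rho$ for all $\rho>0$ with $\|\mathbf{S}\|_{B(X_\rho)}\le Ce^{\rho D}$ for some $C,D>0$ independent of $\rho$, then $\Lambda\subset E_D(0)\times\mathbb{R}^d$.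
   Context: For $\lambda=(t,\omega)\in\mathbb{R}^d\times\mathbb{R}^d$, $U_{(t,\omega)}f(x)=e^{i\langle\omega,x\rangle}f(x-t)$ on $L^2(\mathbb{R}^d)$. $\mathcal{A}$ is the algebra of operators $T=\sum_{\lambda}c_\lambda U_\lambda$ with $\|T\|_{\mathcal{A}}:=\sum_\lambda|c_\lambda|<\infty$; $\mathrm{supp}(c)=\{\lambda:c_\lambda\ne0\}$. $E_r(0)=\{x\in\mathbb{R}^d:\|x\|\le r\}$ is the closed Euclidean ball. $\mathcal{F}f(\omega)=(2\pi)^{-d/2}\int e^{-i\langle\omega,x\rangle}f(x)dx$ is the unitary Fourier transform; $\mathcal{F}^*T\mathcal{F}$ again belongs to $\mathcal{A}$ (conjugating a time-frequency shift by $\mathcal{F}$ gives a time-frequency shift with time and frequency parameters interchanged, up to sign and a unimodular factor). For a compact neighborhood $I$ of $0\in\mathbb{R}^d$, $L^{2,\infty}(\mathbb{R}^d\times I)$ is the Banach space of $f:\mathbb{R}^d\times I\to\mathbb{C}$ with $\|f\|^2_{2,\infty}=\sup_{y\in I}\int_{\mathbb{R}^d}|f(x,y)|^2dx<\infty$. An operator $R=\sum_\lambda a_\lambda U_\lambda\in\mathcal{A}$ is said to extend to $L^{2,\infty}(\mathbb{R}^d\times I)$ if the formula $\mathbf{R}f(x,y)=\sum_{\lambda=(t,\omega)}a_\lambda e^{i\langle\omega,x+iy\rangle}f(x-t,y)$ defines a bounded operator $\mathbf{R}$ on that space. *)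

theory Defs
  imports "HOL-Analysis.Analysis"
begin

text \<open>Dimension: an arbitrary Euclidean space 'a (playing the role of R^d).
  An element T of the algebra A is represented by its coefficient function
  c :: ('a \<times> 'a) \<Rightarrow> complex, with lambda = (t, omega).\<close>

definition tf_supp :: "('a \<times> 'a \<Rightarrow> complex) \<Rightarrow> ('a \<times> 'a) set" where
  "tf_supp c = {l. c l \<noteq> 0}"

definition in_algebra_A :: "('a \<times> 'a \<Rightarrow> complex) \<Rightarrow> bool" where
  "in_algebra_A c \<longleftrightarrow> (\<lambda>l. norm (c l)) summable_on UNIV"

definition A_norm :: "('a \<times> 'a \<Rightarrow> complex) \<Rightarrow> real" where
  "A_norm c = (\<Sum>\<^sub>\<infinity>l. norm (c l))"

definition L2_sq :: "('a::euclidean_space \<Rightarrow> complex) \<Rightarrow> ennreal" where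
  "L2_sq g = (\<integral>\<^sup>+ x. ennreal ((norm (g x))\<^sup>2) \<partial>lborel)"

definition L2inf_sq :: "real \<Rightarrow> ('a::euclidean_space \<Rightarrow> 'a \<Rightarrow> complex) \<Rightarrow> ennreal" where
  "L2inf_sq \<rho> f = (SUP y \<in> cball 0 \<rho>. L2_sq (\<lambda>x. f x y))"

definition in_X :: "real \<Rightarrow> ('a::euclidean_space \<Rightarrow> 'a \<Rightarrow> complex) \<Rightarrow> bool" where
  "in_X \<rho> f \<longleftrightarrow> (\<forall>y \<in> cball 0 \<rho>. (\<lambda>x. f x y) \<in> borel_measurable lborel)
                   \<and> L2inf_sq \<rho> f < \<infinity>"

definition ext_term :: "('a \<times> 'a \<Rightarrow> complex) \<Rightarrow> ('a::euclidean_space \<Rightarrow> 'a \<Rightarrow> complex)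
     \<Rightarrow> 'a \<times> 'a \<Rightarrow> 'a \<Rightarrow> 'a \<Rightarrow> complex" where
  "ext_term a f l x y =
     a l * exp (\<i> * (complex_of_real (snd l \<bullet> x) + \<i> * complex_of_real (snd l \<bullet> y)))
         * f (x - fst l) y"

definition L2_has_sum :: "('b \<Rightarrow> 'a::euclidean_space \<Rightarrow> complex) \<Rightarrow> ('a \<Rightarrow> complex) \<Rightarrow> bool" where
  "L2_has_sum u g \<longleftrightarrow>
     ((\<lambda>F. L2_sq (\<lambda>x. g x - (\<Sum>l\<in>F. u l x))) \<longlongrightarrow> 0) (finite_subsets_at_top UNIV)"

definition extends_bounded :: "real \<Rightarrow> ('a::euclidean_space \<times> 'a \<Rightarrow> complex) \<Rightarrow> real \<Rightarrow> bool" where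
  "extends_bounded \<rho> a M \<longleftrightarrow>
     (\<forall>f. in_X \<rho> f \<longrightarrow>
        (\<exists>g. in_X \<rho> g
             \<and> (\<forall>y \<in> cball 0 \<rho>. L2_has_sum (\<lambda>l x. ext_term a f l x y) (\<lambda>x. g x y))
             \<and> L2inf_sq \<rho> g \<le> ennreal (M\<^sup>2) * L2inf_sq \<rho> f))"

text \<open>Coefficients of S = F^* T F.  With the unitary Fourier transform one computes
  F^* U_(t,omega) F = e^{i<t,omega>} U_(-omega,t), hence the coefficient of S at (t',omega')
  is c(omega', -t') e^{-i<omega',t'>}.\<close>
definition fourier_conj_coeffs :: "('a::euclidean_space \<times> 'a \<Rightarrow> complex) \<Rightarrow> 'a \<times> 'a \<Rightarrow> complex" where
  "fourier_conj_coeffs c l = c (snd l, - fst l) * exp (- \<i> * complex_of_real (snd l \<bullet> fst l))"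

end

theory Submission
  imports Defs
begin
lemma series_sq_bound:
  fixes U :: "nat \<Rightarrow> 'b \<Rightarrow> real" and v :: "nat \<Rightarrow> real"
  assumes meas: "\<And>n. U n \<in> borel_measurable M"
    and U0: "\<And>n x. 0 \<le> U n x" and v0: "\<And>n. 0 \<le> v n"
    and L: "\<And>n. (\<integral>\<^sup>+x. ennreal ((U n x)\<^sup>2) \<partial>M) \<le> L"
  shows "(\<integral>\<^sup>+x. (\<Sum>n. ennreal (v n * U n x))^2 \<partial>M) \<le> (\<Sum>n. ennreal (v n))^2 * L"
proof -
  have sq: "(\<Sum>n. ennreal (v n * U n x))^2 = (\<Sum>n. \<Sum>m. ennreal (v n * U n x) * ennreal (v m * U m x))" for x
    by (simp add: power2_eq_square)
  have sq2: "(\<Sum>n. ennreal (v n))^2 * L = (\<Sum>n. \<Sum>m. ennreal (v n) * ennreal (v m) * L)"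
    by (simp add: power2_eq_square)
  have pt: "(\<integral>\<^sup>+x. ennreal (v n * U n x) * ennreal (v m * U m x) \<partial>M) \<le> ennreal (v n) * ennreal (v m) * L" for n m
  proof -
    have "(\<integral>\<^sup>+x. ennreal (v n * U n x) * ennreal (v m * U m x) \<partial>M)
        = (\<integral>\<^sup>+x. (ennreal (v n) * ennreal (v m)) * ennreal (U n x * U m x) \<partial>M)"
      by (intro nn_integral_cong) (simp add: ennreal_mult[symmetric] U0 v0 mult_ac)
    also have "\<dots> = (ennreal (v n) * ennreal (v m)) * (\<integral>\<^sup>+x. ennreal (U n x * U m x) \<partial>M)"
      using meas by (intro nn_integral_cmult) measurable
    also have "(\<integral>\<^sup>+x. ennreal (U n x * U m x) \<partial>M) \<le> (\<integral>\<^sup>+x. (ennreal ((U n x)\<^sup>2) + ennreal ((U m x)\<^sup>2)) * ennreal (1/2) \<partial>M)"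
    proof (intro nn_integral_mono)
      fix x
      have "U n x * U m x \<le> ((U n x)\<^sup>2 + (U m x)\<^sup>2) * (1/2)"
        using sum_squares_bound[of "U n x" "U m x"] by simp
      then have "ennreal (U n x * U m x) \<le> ennreal (((U n x)\<^sup>2 + (U m x)\<^sup>2) * (1/2))"
        by (rule ennreal_leI)
      also have "\<dots> = ennreal ((U n x)\<^sup>2 + (U m x)\<^sup>2) * ennreal (1/2)"
        by (rule ennreal_mult) auto
      also have "\<dots> = (ennreal ((U n x)\<^sup>2) + ennreal ((U m x)\<^sup>2)) * ennreal (1/2)"
        by (subst ennreal_plus) auto
      finally show "ennreal (U n x * U m x) \<le> (ennreal ((U n x)\<^sup>2) + ennreal ((U m x)\<^sup>2)) * ennreal (1/2)" .
    qed
    also have "\<dots> = ((\<integral>\<^sup>+x. ennreal ((U n x)\<^sup>2) \<partial>M) + (\<integral>\<^sup>+x. ennreal ((U m x)\<^sup>2) \<partial>M)) * ennreal (1/2)"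
      using meas by (simp add: nn_integral_multc nn_integral_add)
    also have "\<dots> \<le> (L + L) * ennreal (1/2)"
      by (intro mult_right_mono add_mono L) simp
    also have "\<dots> = L"
    proof -
      have "(L + L) * ennreal (1/2) = L * (ennreal 2 * ennreal (1/2))"
        by (simp add: mult_2 algebra_simps)
      also have "ennreal 2 * ennreal (1/2) = 1"
        by (subst ennreal_mult[symmetric]) auto
      finally show ?thesis by simp
    qed
    finally show ?thesis by (simp add: mult_left_mono)
  qed
  have "(\<integral>\<^sup>+x. (\<Sum>n. ennreal (v n * U n x))^2 \<partial>M) = (\<Sum>n. \<Sum>m. \<integral>\<^sup>+x. ennreal (v n * U n x) * ennreal (v m * U m x) \<partial>M)"
    unfolding sq using meas[measurable]
    by (subst nn_integral_suminf, measurable) (intro suminf_cong nn_integral_suminf, measurable)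
  also have "\<dots> \<le> (\<Sum>n. \<Sum>m. ennreal (v n) * ennreal (v m) * L)"
    by (intro suminf_le pt summableI allI)
  finally show ?thesis unfolding sq2 .
qed

lemma nn_integral_shift:
  fixes F :: "'a::euclidean_space \<Rightarrow> ennreal"
  assumes [measurable]: "F \<in> borel_measurable borel"
  shows "(\<integral>\<^sup>+x. F (x + a) \<partial>lborel) = (\<integral>\<^sup>+x. F x \<partial>lborel)"
proof -
  have "(\<integral>\<^sup>+x. F x \<partial>lborel) = (\<integral>\<^sup>+x. F x \<partial>(distr lborel borel ((+) a)))"
    by (simp add: lborel_distr_plus)
  also have "\<dots> = (\<integral>\<^sup>+x. F (a + x) \<partial>lborel)"
    by (subst nn_integral_distr) auto
  finally show ?thesis by (simp add: add.commute)
qed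

lemma integral_shift:
  fixes F :: "'a::euclidean_space \<Rightarrow> complex"
  assumes [measurable]: "F \<in> borel_measurable borel"
  shows "(\<integral>x. F (x + a) \<partial>lborel) = (\<integral>x. F x \<partial>lborel)"
proof -
  have "(\<integral>x. F x \<partial>lborel) = (\<integral>x. F x \<partial>(distr lborel borel ((+) a)))"
    by (simp add: lborel_distr_plus)
  also have "\<dots> = (\<integral>x. F (a + x) \<partial>lborel)"
    by (subst integral_distr) auto
  finally show ?thesis by (simp add: add.commute)
qed

lemma L2_sq_shift:
  fixes h :: "'a::euclidean_space \<Rightarrow> complex"
  assumes [measurable]: "h \<in> borel_measurable borel"
  shows "L2_sq (\<lambda>x. h (x - t)) = L2_sq h"
  unfolding L2_sq_def
  using nn_integral_shift[of "\<lambda>x. ennreal ((norm (h x))\<^sup>2)" "-t"] by simp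

lemma ext_term_meas:
  fixes f :: "'a::euclidean_space \<Rightarrow> 'a \<Rightarrow> complex"
  assumes "(\<lambda>x. f x y) \<in> borel_measurable lborel"
  shows "(\<lambda>x. ext_term a f l x y) \<in> borel_measurable borel"
proof -
  have [measurable]: "(\<lambda>x. f x y) \<in> borel_measurable borel"
    using assms by simp
  have [measurable]: "(\<lambda>x. f (x - fst l) y) \<in> borel_measurable borel"
    by measurable
  show ?thesis unfolding ext_term_def by measurable
qed

lemma norm_ext_term:
  fixes f :: "'a::euclidean_space \<Rightarrow> 'a \<Rightarrow> complex"
  shows "norm (ext_term a f l x y) = norm (a l) * exp (- (snd l \<bullet> y)) * norm (f (x - fst l) y)"
  unfolding ext_term_def by (simp add: norm_mult)

lemma norm_ext_term_le:
  fixes f :: "'a::euclidean_space \<Rightarrow> 'a \<Rightarrow> complex"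
  assumes "norm (snd l) \<le> \<Omega>" "norm y \<le> \<rho>" "0 \<le> \<Omega>"
  shows "norm (ext_term a f l x y) \<le> norm (a l) * exp (\<rho> * \<Omega>) * norm (f (x - fst l) y)"
proof -
  have "- (snd l \<bullet> y) \<le> norm (snd l) * norm y"
    using norm_cauchy_schwarz[of "- snd l" y] by simp
  also have "\<dots> \<le> \<Omega> * \<rho>"
    using assms by (intro mult_mono) auto
  finally have "exp (- (snd l \<bullet> y)) \<le> exp (\<rho> * \<Omega>)" by (simp add: mult.commute)
  then show ?thesis unfolding norm_ext_term
    by (intro mult_right_mono mult_left_mono) auto
qed

lemma countable_enum:
  fixes S :: "('a::euclidean_space \<times> 'a) set"
  assumes "countable S"
  obtains e :: "nat \<Rightarrow> 'a \<times> 'a" where "inj e" "S \<subseteq> range e"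
proof -
  obtain b :: 'a where b: "b \<in> Basis" using nonempty_Basis by blast
  define R where "R = range (\<lambda>n::nat. (of_nat n *\<^sub>R b, 0::'a))"
  have "inj (\<lambda>n::nat. (of_nat n *\<^sub>R b, 0::'a))"
    using b by (auto simp: inj_on_def nonzero_Basis)
  then have "infinite R" unfolding R_def using range_inj_infinite by blast
  then have inf: "infinite (S \<union> R)" by simp
  have cnt: "countable (S \<union> R)" using assms unfolding R_def by simp
  have "bij_betw (from_nat_into (S \<union> R)) UNIV (S \<union> R)"
    by (rule bij_betw_from_nat_into[OF cnt inf])
  then show ?thesis
    by (intro that[of "from_nat_into (S \<union> R)"]) (auto simp: bij_betw_def)
qed

lemma has_sum_enum:
  fixes u :: "'l \<Rightarrow> 'b::{comm_monoid_add, topological_space}"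
  assumes "inj e" "\<And>l. l \<notin> range e \<Longrightarrow> u l = 0"
  shows "(u has_sum s) UNIV \<longleftrightarrow> ((\<lambda>n. u (e n)) has_sum s) UNIV"
proof -
  have "(u has_sum s) UNIV \<longleftrightarrow> (u has_sum s) (range e)"
    by (rule has_sum_cong_neutral) (use assms in auto)
  also have "\<dots> \<longleftrightarrow> ((u \<circ> e) has_sum s) UNIV"
    by (rule has_sum_reindex) (use assms in \<open>auto intro: inj_on_subset\<close>)
  finally show ?thesis by (simp add: o_def)
qed

lemma ennreal_sq_le_suminf:
  fixes u :: "nat \<Rightarrow> real"
  assumes "0 \<le> a" "a \<le> suminf u" "\<And>n. 0 \<le> u n" "summable u"
  shows "ennreal (a\<^sup>2) \<le> (\<Sum>n. ennreal (u n))\<^sup>2"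
proof -
  have s: "(\<Sum>n. ennreal (u n)) = ennreal (suminf u)"
    by (rule suminf_ennreal2) (use assms in auto)
  have "a\<^sup>2 \<le> (suminf u)\<^sup>2"
    by (rule power_mono) (use assms in auto)
  then have "ennreal (a\<^sup>2) \<le> ennreal ((suminf u)\<^sup>2)" by (rule ennreal_leI)
  also have "ennreal ((suminf u)\<^sup>2) = (ennreal (suminf u))\<^sup>2"
    by (rule ennreal_power[symmetric]) (rule suminf_nonneg; use assms in auto)
  finally show ?thesis by (simp only: s)
qed

lemma part1_y:
  fixes c :: "('a::euclidean_space \<times> 'a) \<Rightarrow> complex" and f :: "'a \<Rightarrow> 'a \<Rightarrow> complex"
  assumes e: "inj e" "\<And>l. l \<notin> range e \<Longrightarrow> c l = 0"
    and supp: "\<And>l. c l \<noteq> 0 \<Longrightarrow> norm (snd l) \<le> \<Omega>" and \<Omega>: "0 \<le> \<Omega>"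
    and wsum: "(\<lambda>n. norm (c (e n))) sums W"
    and y: "norm y \<le> \<rho>"
    and fm: "(\<lambda>x. f x y) \<in> borel_measurable lborel"
    and Lf: "L2_sq (\<lambda>x. f x y) < \<infinity>"
  shows "(\<lambda>x. \<Sum>n. ext_term c f (e n) x y) \<in> borel_measurable lborel"
    and "L2_sq (\<lambda>x. \<Sum>n. ext_term c f (e n) x y) \<le> ennreal ((W * exp (\<rho> * \<Omega>))\<^sup>2) * L2_sq (\<lambda>x. f x y)"
    and "L2_has_sum (\<lambda>l x. ext_term c f l x y) (\<lambda>x. \<Sum>n. ext_term c f (e n) x y)"
proof -
  define h where "h n x = ext_term c f (e n) x y" for n x
  define K where "K = exp (\<rho> * \<Omega>)"
  define w where "w n = norm (c (e n))" for n
  define Lr where "Lr = enn2real (L2_sq (\<lambda>x. f x y))"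
  have Lr: "L2_sq (\<lambda>x. f x y) = ennreal Lr" "0 \<le> Lr"
  proof -
    have "L2_sq (\<lambda>x. f x y) \<noteq> top" using Lf by simp
    then show "L2_sq (\<lambda>x. f x y) = ennreal Lr" unfolding Lr_def by (simp add: ennreal_enn2real_if)
    show "0 \<le> Lr" unfolding Lr_def by (rule enn2real_nonneg)
  qed
  have K0: "0 < K" unfolding K_def by simp
  have w0: "0 \<le> w n" for n unfolding w_def by simp
  have fmb[measurable]: "(\<lambda>x. f x y) \<in> borel_measurable borel" using fm by simp
  have hmeas[measurable]: "h n \<in> borel_measurable borel" for n
    unfolding h_def by (rule ext_term_meas[of f y, OF fm])
  have hbound: "norm (h n x) \<le> w n * (K * norm (f (x - fst (e n)) y))" for n x
  proof (cases "c (e n) = 0")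
    case True then show ?thesis by (simp add: h_def ext_term_def w_def)
  next
    case False
    then show ?thesis unfolding h_def w_def K_def
      using norm_ext_term_le[of "e n" \<Omega> y \<rho> c f x] supp[OF False] y \<Omega> by (simp add: mult_ac)
  qed
  define T where "T N = (\<Sum>n. if n < N then 0 else w n)" for N
  have Tsums: "(\<lambda>n. if n < N then 0 else w n) sums (W - sum w {..<N})" for N
  proof -
    have "(\<lambda>n. w n - (if n \<in> {..<N} then w n else 0)) sums (W - sum w {..<N})"
      using sums_diff[OF wsum[folded w_def] sums_If_finite_set[of "{..<N}" w]] by simp
    then show ?thesis by (rule sums_cong[THEN iffD1, rotated]) auto
  qed
  have T: "T N = W - sum w {..<N}" for N
    unfolding T_def by (rule sums_unique[OF Tsums, symmetric])
  have Tsum: "summable (\<lambda>n. if n < N then 0 else w n)" for N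
    using Tsums by (auto simp: sums_iff)
  have Tlim: "T \<longlonglongrightarrow> 0"
  proof -
    have "(\<lambda>N. sum w {..<N}) \<longlonglongrightarrow> W"
      using wsum[folded w_def] by (simp add: sums_def)
    then have "(\<lambda>N. W - sum w {..<N}) \<longlonglongrightarrow> W - W"
      by (intro tendsto_diff) auto
    moreover have "T = (\<lambda>N. W - sum w {..<N})" using T by auto
    ultimately show ?thesis by simp
  qed
  have T0: "0 \<le> T N" for N
    unfolding T_def using Tsum w0 by (intro suminf_nonneg) auto
  have L_U: "(\<integral>\<^sup>+x. ennreal ((K * norm (f (x - fst (e n)) y))\<^sup>2) \<partial>lborel) \<le> ennreal (K\<^sup>2 * Lr)" for n
  proof -
    have "(\<integral>\<^sup>+x. ennreal ((K * norm (f (x - fst (e n)) y))\<^sup>2) \<partial>lborel)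
        = (\<integral>\<^sup>+x. ennreal (K\<^sup>2) * ennreal ((norm (f (x - fst (e n)) y))\<^sup>2) \<partial>lborel)"
      by (intro nn_integral_cong) (simp add: ennreal_mult[symmetric] power_mult_distrib)
    also have "\<dots> = ennreal (K\<^sup>2) * L2_sq (\<lambda>x. f (x - fst (e n)) y)"
      unfolding L2_sq_def by (intro nn_integral_cmult) measurable
    also have "L2_sq (\<lambda>x. f (x - fst (e n)) y) = L2_sq (\<lambda>x. f x y)"
      by (rule L2_sq_shift[of "\<lambda>x. f x y"]) measurable
    finally show ?thesis using Lr by (simp add: ennreal_mult[symmetric])
  qed
  have key: "(\<integral>\<^sup>+x. (\<Sum>n. ennreal (if n < N then 0 else norm (h n x)))\<^sup>2 \<partial>lborel)
             \<le> ennreal ((T N)\<^sup>2 * (K\<^sup>2 * Lr))" for N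
  proof -
    have "(\<integral>\<^sup>+x. (\<Sum>n. ennreal (if n < N then 0 else norm (h n x)))\<^sup>2 \<partial>lborel)
       \<le> (\<integral>\<^sup>+x. (\<Sum>n. ennreal ((if n < N then 0 else w n) * (K * norm (f (x - fst (e n)) y))))\<^sup>2 \<partial>lborel)"
    proof (rule nn_integral_mono)
      fix x
      have "(\<Sum>n. ennreal (if n < N then 0 else norm (h n x)))
          \<le> (\<Sum>n. ennreal ((if n < N then 0 else w n) * (K * norm (f (x - fst (e n)) y))))"
      proof (rule suminf_le[OF _ summableI summableI])
        fix n
        show "ennreal (if n < N then 0 else norm (h n x))
          \<le> ennreal ((if n < N then 0 else w n) * (K * norm (f (x - fst (e n)) y)))"
          by (rule ennreal_leI) (simp add: hbound)
      qed
      then show "(\<Sum>n. ennreal (if n < N then 0 else norm (h n x)))\<^sup>2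
          \<le> (\<Sum>n. ennreal ((if n < N then 0 else w n) * (K * norm (f (x - fst (e n)) y))))\<^sup>2"
        by (rule power_mono) simp
    qed
    also have "\<dots> \<le> (\<Sum>n. ennreal (if n < N then 0 else w n))\<^sup>2 * ennreal (K\<^sup>2 * Lr)"
      by (rule series_sq_bound) (use L_U w0 K0 in \<open>auto\<close>)
    also have "(\<Sum>n. ennreal (if n < N then 0 else w n)) = ennreal (T N)"
      unfolding T_def using Tsum w0 by (intro suminf_ennreal2) auto
    finally show ?thesis
      using T0 Lr by (simp add: ennreal_power ennreal_mult[symmetric])
  qed
  have key0: "(\<integral>\<^sup>+x. (\<Sum>n. ennreal (norm (h n x)))\<^sup>2 \<partial>lborel) \<le> ennreal (W\<^sup>2 * (K\<^sup>2 * Lr))"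
    using key[of 0] by (simp add: T)
  have AEsum: "AE x in lborel. summable (\<lambda>n. norm (h n x))"
  proof -
    have "AE x in lborel. (\<Sum>n. ennreal (norm (h n x)))\<^sup>2 \<noteq> \<infinity>"
      by (rule nn_integral_PInf_AE) (use key0 in \<open>auto simp: top_unique\<close>)
    then show ?thesis
      by eventually_elim (auto intro!: summable_suminf_not_top simp: power_eq_top_ennreal)
  qed
  show meas: "(\<lambda>x. \<Sum>n. ext_term c f (e n) x y) \<in> borel_measurable lborel"
    using hmeas unfolding h_def by simp
  show "L2_sq (\<lambda>x. \<Sum>n. ext_term c f (e n) x y) \<le> ennreal ((W * exp (\<rho> * \<Omega>))\<^sup>2) * L2_sq (\<lambda>x. f x y)"
  proof -
    have "L2_sq (\<lambda>x. \<Sum>n. ext_term c f (e n) x y) \<le> (\<integral>\<^sup>+x. (\<Sum>n. ennreal (norm (h n x)))\<^sup>2 \<partial>lborel)"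
      unfolding L2_sq_def h_def[symmetric]
    proof (rule nn_integral_mono_AE)
      show "AE x in lborel. ennreal ((norm (\<Sum>n. h n x))\<^sup>2) \<le> (\<Sum>n. ennreal (norm (h n x)))\<^sup>2"
        using AEsum by eventually_elim (auto intro!: ennreal_sq_le_suminf summable_norm)
    qed
    also have "\<dots> \<le> ennreal (W\<^sup>2 * (K\<^sup>2 * Lr))" by (rule key0)
    also have "\<dots> = ennreal ((W * exp (\<rho> * \<Omega>))\<^sup>2) * L2_sq (\<lambda>x. f x y)"
      using Lr by (simp add: K_def ennreal_mult[symmetric] power_mult_distrib mult_ac)
    finally show ?thesis .
  qed
  show "L2_has_sum (\<lambda>l x. ext_term c f l x y) (\<lambda>x. \<Sum>n. ext_term c f (e n) x y)"
    unfolding L2_has_sum_def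
  proof (rule order_tendstoI, simp)
    fix a :: ennreal assume a: "0 < a"
    have "(\<lambda>N. ennreal ((T N)\<^sup>2 * (K\<^sup>2 * Lr))) \<longlonglongrightarrow> ennreal ((0::real)\<^sup>2 * (K\<^sup>2 * Lr))"
      by (intro tendsto_ennrealI tendsto_intros Tlim)
    then have "eventually (\<lambda>N. ennreal ((T N)\<^sup>2 * (K\<^sup>2 * Lr)) < a) sequentially"
      using a by (intro order_tendstoD(2)) auto
    then obtain N where N: "ennreal ((T N)\<^sup>2 * (K\<^sup>2 * Lr)) < a"
      by (auto simp: eventually_sequentially)
    show "eventually (\<lambda>F. L2_sq (\<lambda>x. (\<Sum>n. ext_term c f (e n) x y) - (\<Sum>l\<in>F. ext_term c f l x y)) < a)
            (finite_subsets_at_top UNIV)"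
      unfolding eventually_finite_subsets_at_top
    proof (intro exI[of _ "e ` {..<N}"] conjI allI impI)
      fix Y assume Y: "finite Y \<and> e ` {..<N} \<subseteq> Y \<and> Y \<subseteq> UNIV"
      define I where "I = e -` Y"
      have finI: "finite I" unfolding I_def using Y e(1) by (auto intro: finite_vimageI)
      have NI: "{..<N} \<subseteq> I" unfolding I_def using Y by auto
      have sumY: "(\<Sum>l\<in>Y. ext_term c f l x y) = (\<Sum>n\<in>I. h n x)" for x
      proof -
        have "(\<Sum>l\<in>Y. ext_term c f l x y) = (\<Sum>l\<in>e ` I. ext_term c f l x y)"
          unfolding I_def
          by (rule sum.mono_neutral_right) (use Y e(2) in \<open>auto simp: ext_term_def\<close>)
        also have "\<dots> = (\<Sum>n\<in>I. h n x)"
          by (subst sum.reindex) (use e(1) in \<open>auto simp: h_def inj_on_def\<close>)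
        finally show ?thesis .
      qed
      have pt: "ennreal ((norm ((\<Sum>n. h n x) - (\<Sum>n\<in>I. h n x)))\<^sup>2)
                 \<le> (\<Sum>n. ennreal (if n < N then 0 else norm (h n x)))\<^sup>2"
        if sx: "summable (\<lambda>n. norm (h n x))" for x
      proof -
        have hs: "(\<lambda>n. h n x) sums (\<Sum>n. h n x)"
          using summable_norm_cancel[OF sx] by (simp add: summable_sums)
        have "(\<lambda>n. h n x - (if n \<in> I then h n x else 0)) sums ((\<Sum>n. h n x) - (\<Sum>n\<in>I. h n x))"
          using sums_diff[OF hs sums_If_finite_set[OF finI]] by simp
        moreover have "(\<lambda>n. h n x - (if n \<in> I then h n x else 0)) = (\<lambda>n. if n \<in> I then 0 else h n x)"
          by auto
        ultimately have eq: "(\<Sum>n. h n x) - (\<Sum>n\<in>I. h n x) = (\<Sum>n. if n \<in> I then 0 else h n x)"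
          by (simp add: sums_unique)
        have s1: "summable (\<lambda>n. norm (if n \<in> I then 0 else h n x))"
          by (rule summable_comparison_test[OF _ sx]) auto
        have s2: "summable (\<lambda>n. if n < N then 0 else norm (h n x))"
          by (rule summable_comparison_test[OF _ sx]) auto
        have "norm (\<Sum>n. if n \<in> I then 0 else h n x) \<le> (\<Sum>n. norm (if n \<in> I then 0 else h n x))"
          by (rule summable_norm[OF s1])
        also have "\<dots> \<le> (\<Sum>n. if n < N then 0 else norm (h n x))"
          by (rule suminf_le[OF _ s1 s2]) (use NI in auto)
        finally show ?thesis unfolding eq
          by (intro ennreal_sq_le_suminf s2) auto
      qed
      have "L2_sq (\<lambda>x. (\<Sum>n. ext_term c f (e n) x y) - (\<Sum>l\<in>Y. ext_term c f l x y))
          \<le> (\<integral>\<^sup>+x. (\<Sum>n. ennreal (if n < N then 0 else norm (h n x)))\<^sup>2 \<partial>lborel)"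
        unfolding L2_sq_def sumY h_def[symmetric]
        by (rule nn_integral_mono_AE) (use AEsum pt in \<open>auto elim!: eventually_mono\<close>)
      also have "\<dots> \<le> ennreal ((T N)\<^sup>2 * (K\<^sup>2 * Lr))" by (rule key)
      also have "\<dots> < a" by (rule N)
      finally show "L2_sq (\<lambda>x. (\<Sum>n. ext_term c f (e n) x y) - (\<Sum>l\<in>Y. ext_term c f l x y)) < a" .
    qed auto
  qed
qed

lemma part1:
  fixes c :: "('a::euclidean_space \<times> 'a) \<Rightarrow> complex"
  assumes A: "in_algebra_A c" and supp: "\<And>l. c l \<noteq> 0 \<Longrightarrow> norm (snd l) \<le> \<Omega>"
    and \<Omega>: "0 \<le> \<Omega>"
  shows "extends_bounded \<rho> c (A_norm c * exp (\<rho> * \<Omega>))"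
proof -
  have "countable {x \<in> UNIV. norm (c x) \<noteq> 0}"
    using A unfolding in_algebra_A_def by (rule summable_countable_real)
  then have cnt: "countable {l. c l \<noteq> 0}" by simp
  obtain e :: "nat \<Rightarrow> 'a \<times> 'a" where e: "inj e" "{l. c l \<noteq> 0} \<subseteq> range e"
    using countable_enum[OF cnt] by blast
  have zero: "\<And>l. l \<notin> range e \<Longrightarrow> c l = 0" using e by auto
  have "((\<lambda>l. norm (c l)) has_sum A_norm c) UNIV"
    using A unfolding in_algebra_A_def A_norm_def by (rule has_sum_infsum)
  then have "((\<lambda>n. norm (c (e n))) has_sum A_norm c) UNIV"
    using has_sum_enum[OF e(1), of "\<lambda>l. norm (c l)"] zero by auto
  then have wsum: "(\<lambda>n. norm (c (e n))) sums A_norm c"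
    by (rule has_sum_imp_sums)
  define M where "M = A_norm c * exp (\<rho> * \<Omega>)"
  show ?thesis unfolding extends_bounded_def M_def[symmetric]
  proof (intro allI impI)
    fix f :: "'a \<Rightarrow> 'a \<Rightarrow> complex"
    assume fX: "in_X \<rho> f"
    have fm: "\<And>y. y \<in> cball 0 \<rho> \<Longrightarrow> (\<lambda>x. f x y) \<in> borel_measurable lborel"
      using fX unfolding in_X_def by auto
    have Lf: "L2inf_sq \<rho> f < \<infinity>" using fX unfolding in_X_def by auto
    have Lfy: "L2_sq (\<lambda>x. f x y) \<le> L2inf_sq \<rho> f" if "y \<in> cball 0 \<rho>" for y
      unfolding L2inf_sq_def using that by (rule SUP_upper)
    define g where "g x y = (\<Sum>n. ext_term c f (e n) x y)" for x y
    note P = part1_y[OF e(1) zero supp \<Omega> wsum, of _ \<rho> f]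
    have gy: "L2_sq (\<lambda>x. g x y) \<le> ennreal (M\<^sup>2) * L2inf_sq \<rho> f" if y: "y \<in> cball 0 \<rho>" for y
    proof -
      have "L2_sq (\<lambda>x. f x y) < \<infinity>" using Lfy[OF y] Lf by (rule le_less_trans)
      then have "L2_sq (\<lambda>x. g x y) \<le> ennreal (M\<^sup>2) * L2_sq (\<lambda>x. f x y)"
        unfolding g_def M_def using P(2)[of y] y fm[OF y] by simp
      also have "\<dots> \<le> ennreal (M\<^sup>2) * L2inf_sq \<rho> f"
        by (intro mult_left_mono Lfy y) simp
      finally show ?thesis .
    qed
    have gbound: "L2inf_sq \<rho> g \<le> ennreal (M\<^sup>2) * L2inf_sq \<rho> f"
      unfolding L2inf_sq_def[of \<rho> g] by (rule SUP_least) (rule gy)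
    show "\<exists>g. in_X \<rho> g \<and> (\<forall>y\<in>cball 0 \<rho>. L2_has_sum (\<lambda>l x. ext_term c f l x y) (\<lambda>x. g x y))
             \<and> L2inf_sq \<rho> g \<le> ennreal (M\<^sup>2) * L2inf_sq \<rho> f"
    proof (intro exI[of _ g] conjI ballI)
      show "in_X \<rho> g" unfolding in_X_def
      proof (intro conjI ballI)
        fix y :: 'a assume y: "y \<in> cball 0 \<rho>"
        have "L2_sq (\<lambda>x. f x y) < \<infinity>" using Lfy[OF y] Lf by (rule le_less_trans)
        then show "(\<lambda>x. g x y) \<in> borel_measurable lborel"
          unfolding g_def using P(1)[of y] y fm[OF y] by simp
      next
        have "ennreal (M\<^sup>2) * L2inf_sq \<rho> f < \<infinity>"
          using Lf by (simp add: ennreal_mult_less_top)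
        then show "L2inf_sq \<rho> g < \<infinity>" using gbound by (rule le_less_trans[rotated])
      qed
    next
      fix y :: 'a assume y: "y \<in> cball 0 \<rho>"
      have "L2_sq (\<lambda>x. f x y) < \<infinity>" using Lfy[OF y] Lf by (rule le_less_trans)
      then show "L2_has_sum (\<lambda>l x. ext_term c f l x y) (\<lambda>x. g x y)"
        unfolding g_def using P(3)[of y] y fm[OF y] by simp
    next
      show "L2inf_sq \<rho> g \<le> ennreal (M\<^sup>2) * L2inf_sq \<rho> f" by (rule gbound)
    qed
  qed
qed

lemma borel_measurable_cnj_comp[measurable (raw)]:
  fixes f :: "'b \<Rightarrow> complex"
  assumes "f \<in> borel_measurable M"
  shows "(\<lambda>x. cnj (f x)) \<in> borel_measurable M"
  by (rule borel_measurable_continuous_on[OF _ assms]) (intro continuous_on_cnj continuous_on_id)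

lemma amgm_k:
  fixes a b k :: real
  assumes "0 < k"
  shows "2 * (a * b) \<le> a\<^sup>2 / k + k * b\<^sup>2"
proof -
  have "0 \<le> (a - k * b)\<^sup>2 / k" using assms by simp
  also have "(a - k * b)\<^sup>2 / k = a\<^sup>2 / k + k * b\<^sup>2 - 2 * (a * b)"
    using assms by (simp add: power2_diff field_simps power2_eq_square)
  finally show ?thesis by simp
qed

lemma inner_bound:
  fixes h \<psi> :: "'a::euclidean_space \<Rightarrow> complex"
  assumes [measurable]: "h \<in> borel_measurable borel" "\<psi> \<in> borel_measurable borel"
    and Lh: "L2_sq h < \<infinity>" and Lp: "L2_sq \<psi> < \<infinity>" and k: "0 < k"
  shows "integrable lborel (\<lambda>x. h x * cnj (\<psi> x))"
    and "ennreal (2 * norm (\<integral>x. h x * cnj (\<psi> x) \<partial>lborel)) \<le> ennreal (1/k) * L2_sq h + ennreal k * L2_sq \<psi>"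
proof -
  have pt: "ennreal 2 * ennreal (norm (h x * cnj (\<psi> x)))
      \<le> ennreal (1/k) * ennreal ((norm (h x))\<^sup>2) + ennreal k * ennreal ((norm (\<psi> x))\<^sup>2)" for x
  proof -
    have "2 * (norm (h x) * norm (\<psi> x)) \<le> (norm (h x))\<^sup>2 / k + k * (norm (\<psi> x))\<^sup>2"
      by (rule amgm_k[OF k])
    then have "ennreal (2 * (norm (h x) * norm (\<psi> x))) \<le> ennreal ((norm (h x))\<^sup>2 / k + k * (norm (\<psi> x))\<^sup>2)"
      by (rule ennreal_leI)
    moreover have "ennreal 2 * ennreal (norm (h x * cnj (\<psi> x))) = ennreal (2 * (norm (h x) * norm (\<psi> x)))"
      by (subst ennreal_mult[symmetric]) (auto simp: norm_mult)
    moreover have e1: "ennreal ((norm (h x))\<^sup>2 / k + k * (norm (\<psi> x))\<^sup>2)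
        = ennreal ((norm (h x))\<^sup>2 / k) + ennreal (k * (norm (\<psi> x))\<^sup>2)"
      by (rule ennreal_plus) (use k in auto)
    moreover have e2: "ennreal ((norm (h x))\<^sup>2 / k) = ennreal (1/k) * ennreal ((norm (h x))\<^sup>2)"
      by (subst ennreal_mult[symmetric]) (use k in auto)
    moreover have e3: "ennreal (k * (norm (\<psi> x))\<^sup>2) = ennreal k * ennreal ((norm (\<psi> x))\<^sup>2)"
      by (rule ennreal_mult) (use k in auto)
    ultimately show ?thesis by simp
  qed
  have int: "ennreal 2 * (\<integral>\<^sup>+x. ennreal (norm (h x * cnj (\<psi> x))) \<partial>lborel)
      \<le> ennreal (1/k) * L2_sq h + ennreal k * L2_sq \<psi>"
  proof -
    have "ennreal 2 * (\<integral>\<^sup>+x. ennreal (norm (h x * cnj (\<psi> x))) \<partial>lborel)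
        = (\<integral>\<^sup>+x. ennreal 2 * ennreal (norm (h x * cnj (\<psi> x))) \<partial>lborel)"
      by (rule nn_integral_cmult[symmetric]) measurable
    also have "\<dots> \<le> (\<integral>\<^sup>+x. ennreal (1/k) * ennreal ((norm (h x))\<^sup>2) + ennreal k * ennreal ((norm (\<psi> x))\<^sup>2) \<partial>lborel)"
      by (rule nn_integral_mono) (rule pt)
    also have "\<dots> = ennreal (1/k) * L2_sq h + ennreal k * L2_sq \<psi>"
      unfolding L2_sq_def by (simp add: nn_integral_add nn_integral_cmult)
    finally show ?thesis .
  qed
  have fin: "(\<integral>\<^sup>+x. ennreal (norm (h x * cnj (\<psi> x))) \<partial>lborel) < \<infinity>"
  proof -
    have "ennreal (1/k) * L2_sq h + ennreal k * L2_sq \<psi> < \<infinity>"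
      using Lh Lp by (simp add: ennreal_mult_less_top)
    then have "ennreal 2 * (\<integral>\<^sup>+x. ennreal (norm (h x * cnj (\<psi> x))) \<partial>lborel) < \<infinity>"
      using int by (rule le_less_trans[rotated])
    then show ?thesis by (auto simp: ennreal_mult_less_top)
  qed
  show I: "integrable lborel (\<lambda>x. h x * cnj (\<psi> x))"
    by (rule integrableI_bounded) (use fin in simp_all)
  have "ennreal (2 * norm (\<integral>x. h x * cnj (\<psi> x) \<partial>lborel))
      = ennreal 2 * ennreal (norm (\<integral>x. h x * cnj (\<psi> x) \<partial>lborel))"
    by (simp add: ennreal_mult)
  also have "\<dots> \<le> ennreal 2 * (\<integral>\<^sup>+x. ennreal (norm (h x * cnj (\<psi> x))) \<partial>lborel)"
    by (intro mult_left_mono integral_norm_bound_ennreal I) simp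
  also have "\<dots> \<le> ennreal (1/k) * L2_sq h + ennreal k * L2_sq \<psi>" by (rule int)
  finally show "ennreal (2 * norm (\<integral>x. h x * cnj (\<psi> x) \<partial>lborel)) \<le> ennreal (1/k) * L2_sq h + ennreal k * L2_sq \<psi>" .
qed

lemma L2_sq_fin_sum:
  fixes u :: "'l \<Rightarrow> 'a::euclidean_space \<Rightarrow> complex"
  assumes "finite F" and um[measurable]: "\<And>l. u l \<in> borel_measurable borel"
    and pm[measurable]: "\<psi> \<in> borel_measurable borel" and pL: "L2_sq \<psi> < \<infinity>"
    and uL: "\<And>l. L2_sq (u l) < \<infinity>"
  shows "(\<Sum>l\<in>F. \<integral>x. u l x * cnj (\<psi> x) \<partial>lborel) = (\<integral>x. (\<Sum>l\<in>F. u l x) * cnj (\<psi> x) \<partial>lborel)"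
    and "integrable lborel (\<lambda>x. (\<Sum>l\<in>F. u l x) * cnj (\<psi> x))"
proof -
  have I: "integrable lborel (\<lambda>x. u l x * cnj (\<psi> x))" for l
    by (rule inner_bound(1)[OF um pm uL pL, of 1]) simp
  show "(\<Sum>l\<in>F. \<integral>x. u l x * cnj (\<psi> x) \<partial>lborel) = (\<integral>x. (\<Sum>l\<in>F. u l x) * cnj (\<psi> x) \<partial>lborel)"
    unfolding sum_distrib_right by (rule Bochner_Integration.integral_sum[symmetric, of F lborel "\<lambda>l x. u l x * cnj (\<psi> x)"]) (rule I)
  show "integrable lborel (\<lambda>x. (\<Sum>l\<in>F. u l x) * cnj (\<psi> x))"
    unfolding sum_distrib_right by (rule Bochner_Integration.integrable_sum[of F lborel "\<lambda>l x. u l x * cnj (\<psi> x)"]) (rule I)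
qed

lemma L2_has_sum_inner:
  fixes u :: "'l \<Rightarrow> 'a::euclidean_space \<Rightarrow> complex"
  assumes hs: "L2_has_sum u G"
    and um[measurable]: "\<And>l. u l \<in> borel_measurable borel" and uL: "\<And>l. L2_sq (u l) < \<infinity>"
    and Gm[measurable]: "G \<in> borel_measurable borel" and GL: "L2_sq G < \<infinity>"
    and pm[measurable]: "\<psi> \<in> borel_measurable borel" and pL: "L2_sq \<psi> < \<infinity>"
  shows "((\<lambda>l. \<integral>x. u l x * cnj (\<psi> x) \<partial>lborel) has_sum (\<integral>x. G x * cnj (\<psi> x) \<partial>lborel)) UNIV"
  unfolding has_sum_def
proof (rule tendstoI)
  fix \<epsilon> :: real assume \<epsilon>: "0 < \<epsilon>"
  define Pr where "Pr = enn2real (L2_sq \<psi>)"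
  have Pr: "L2_sq \<psi> = ennreal Pr" "0 \<le> Pr"
    using pL unfolding Pr_def by (auto simp: ennreal_enn2real_if)
  define k where "k = \<epsilon> / (2 * (Pr + 1))"
  have k: "0 < k" unfolding k_def using \<epsilon> Pr by simp
  have kPr: "k * Pr \<le> \<epsilon> / 2"
    unfolding k_def using \<epsilon> Pr by (simp add: field_simps)
  have "0 < ennreal (k * \<epsilon> / 4)" using k \<epsilon> by simp
  from order_tendstoD(2)[OF hs[unfolded L2_has_sum_def] this]
  show "eventually (\<lambda>F. dist (sum (\<lambda>l. \<integral>x. u l x * cnj (\<psi> x) \<partial>lborel) F) (\<integral>x. G x * cnj (\<psi> x) \<partial>lborel) < \<epsilon>)
          (finite_subsets_at_top UNIV)"
  proof (rule eventually_mono[OF eventually_conj[OF _ eventually_finite_subsets_at_top_weakI]])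
    fix F assume F: "L2_sq (\<lambda>x. G x - (\<Sum>l\<in>F. u l x)) < ennreal (k * \<epsilon> / 4) \<and> finite F"
    define S where "S x = (\<Sum>l\<in>F. u l x)" for x
    have Sm[measurable]: "S \<in> borel_measurable borel" unfolding S_def by measurable
    have LD: "L2_sq (\<lambda>x. G x - S x) < \<infinity>"
      unfolding S_def using conjunct1[OF F] by (rule order.strict_trans) simp
    have IG: "integrable lborel (\<lambda>x. G x * cnj (\<psi> x))"
      by (rule inner_bound(1)[OF Gm pm GL pL, of 1]) simp
    have IS: "integrable lborel (\<lambda>x. S x * cnj (\<psi> x))"
      unfolding S_def by (rule L2_sq_fin_sum(2)[OF conjunct2[OF F] um pm pL uL])
    have eq: "sum (\<lambda>l. \<integral>x. u l x * cnj (\<psi> x) \<partial>lborel) F = (\<integral>x. S x * cnj (\<psi> x) \<partial>lborel)"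
      unfolding S_def by (rule L2_sq_fin_sum(1)[OF conjunct2[OF F] um pm pL uL])
    have dist: "dist (sum (\<lambda>l. \<integral>x. u l x * cnj (\<psi> x) \<partial>lborel) F) (\<integral>x. G x * cnj (\<psi> x) \<partial>lborel)
        = norm (\<integral>x. (G x - S x) * cnj (\<psi> x) \<partial>lborel)"
    proof -
      have "(\<integral>x. (G x - S x) * cnj (\<psi> x) \<partial>lborel) = (\<integral>x. G x * cnj (\<psi> x) - S x * cnj (\<psi> x) \<partial>lborel)"
        by (simp add: left_diff_distrib)
      also have "\<dots> = (\<integral>x. G x * cnj (\<psi> x) \<partial>lborel) - (\<integral>x. S x * cnj (\<psi> x) \<partial>lborel)"
        by (rule Bochner_Integration.integral_diff[OF IG IS])
      finally show ?thesis unfolding eq dist_commute[of "\<integral>x. S x * cnj (\<psi> x) \<partial>lborel"] dist_norm by (simp add: norm_minus_commute)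
    qed
    have "ennreal (2 * norm (\<integral>x. (G x - S x) * cnj (\<psi> x) \<partial>lborel))
        \<le> ennreal (1/k) * L2_sq (\<lambda>x. G x - S x) + ennreal k * L2_sq \<psi>"
      by (rule inner_bound(2)) (use LD pL k in auto)
    also have "\<dots> \<le> ennreal (1/k) * ennreal (k * \<epsilon> / 4) + ennreal k * ennreal Pr"
      using F unfolding S_def Pr by (intro add_mono mult_left_mono) auto
    also have "\<dots> = ennreal (\<epsilon> / 4 + k * Pr)"
    proof -
      have "ennreal (1/k) * ennreal (k * \<epsilon> / 4) = ennreal (1/k * (k * \<epsilon> / 4))"
        by (rule ennreal_mult[symmetric]) (use k \<epsilon> in auto)
      also have "1/k * (k * \<epsilon> / 4) = \<epsilon> / 4" using k by simp
      finally have a: "ennreal (1/k) * ennreal (k * \<epsilon> / 4) = ennreal (\<epsilon> / 4)" .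
      have b: "ennreal k * ennreal Pr = ennreal (k * Pr)"
        by (rule ennreal_mult[symmetric]) (use k Pr in auto)
      have c: "ennreal (\<epsilon> / 4) + ennreal (k * Pr) = ennreal (\<epsilon> / 4 + k * Pr)"
        by (rule ennreal_plus[symmetric]) (use k Pr \<epsilon> in auto)
      show ?thesis unfolding a b c ..
    qed
    finally have "2 * norm (\<integral>x. (G x - S x) * cnj (\<psi> x) \<partial>lborel) \<le> \<epsilon> / 4 + k * Pr"
      by (rule ennreal_le_iff[THEN iffD1, rotated]) (use k \<epsilon> Pr in auto)
    then show "dist (sum (\<lambda>l. \<integral>x. u l x * cnj (\<psi> x) \<partial>lborel) F) (\<integral>x. G x * cnj (\<psi> x) \<partial>lborel) < \<epsilon>"
      unfolding dist using kPr \<epsilon> by linarith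
  qed auto
qed

definition phi :: "'a::euclidean_space \<Rightarrow> complex" where
  "phi x = complex_of_real (indicator (cbox 0 One) x)"

definition tf_f :: "'a::euclidean_space \<Rightarrow> 'a \<Rightarrow> 'a \<Rightarrow> 'a \<Rightarrow> complex" where
  "tf_f a \<eta> = (\<lambda>x y. exp (\<i> * complex_of_real (\<eta> \<bullet> x)) * phi (x - a))"

definition tf_psi :: "'a::euclidean_space \<Rightarrow> 'a \<Rightarrow> 'a \<times> 'a \<Rightarrow> 'a \<Rightarrow> complex" where
  "tf_psi a \<eta> l0 = (\<lambda>x. exp (\<i> * complex_of_real (\<eta> \<bullet> x)) * exp (\<i> * complex_of_real (snd l0 \<bullet> (x - a))) * phi (x - a - fst l0))"

definition kcoef :: "'a::euclidean_space \<times> 'a \<Rightarrow> 'a \<times> 'a \<Rightarrow> complex" where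
  "kcoef l0 l = (\<integral>x. exp (\<i> * complex_of_real ((snd l - snd l0) \<bullet> x)) * phi (x - fst l) * phi (x - fst l0) \<partial>lborel)"

lemma phi_meas[measurable]: "phi \<in> borel_measurable borel"
  unfolding phi_def by measurable

lemma cnj_phi[simp]: "cnj (phi x) = phi x"
  unfolding phi_def by simp

lemma norm_phi_sq: "(norm (phi x))\<^sup>2 = indicator (cbox 0 One) x"
  unfolding phi_def by (simp add: indicator_def)

lemma phi_sq: "phi x * phi x = phi x"
  unfolding phi_def by (simp add: indicator_def)

lemma L2_sq_phi: "L2_sq (phi :: 'a::euclidean_space \<Rightarrow> complex) = 1"
proof -
  have "L2_sq (phi :: 'a \<Rightarrow> complex) = (\<integral>\<^sup>+x. indicator (cbox (0::'a) One) x \<partial>lborel)"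
    unfolding L2_sq_def norm_phi_sq by (simp add: ennreal_indicator)
  also have "\<dots> = emeasure lborel (cbox (0::'a) One)" by simp
  also have "\<dots> = 1" by (simp add: emeasure_lborel_cbox_eq)
  finally show ?thesis .
qed

lemma L2_sq_mod_phi:
  fixes a \<eta> :: "'a::euclidean_space"
  shows "L2_sq (\<lambda>x. exp (\<i> * complex_of_real r) * exp (\<i> * complex_of_real (\<eta> \<bullet> x)) * phi (x - a)) = 1"
proof -
  have "L2_sq (\<lambda>x. exp (\<i> * complex_of_real r) * exp (\<i> * complex_of_real (\<eta> \<bullet> x)) * phi (x - a)) = L2_sq (\<lambda>x. phi (x - a))"
    unfolding L2_sq_def by (simp add: norm_mult)
  also have "\<dots> = 1" by (simp add: L2_sq_shift L2_sq_phi)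
  finally show ?thesis .
qed

lemma tf_f_L2: "L2_sq (\<lambda>x. tf_f a \<eta> x y) = 1"
  using L2_sq_mod_phi[of 0 \<eta> a] unfolding tf_f_def by simp

lemma tf_psi_L2: "L2_sq (tf_psi a \<eta> l0) = 1"
proof -
  have "L2_sq (tf_psi a \<eta> l0) = L2_sq (\<lambda>x. phi (x - a - fst l0))"
    unfolding L2_sq_def tf_psi_def by (simp add: norm_mult)
  also have "\<dots> = L2_sq (\<lambda>x. phi (x - (a + fst l0)))" by (simp add: diff_diff_eq)
  also have "\<dots> = 1" by (simp add: L2_sq_shift L2_sq_phi)
  finally show ?thesis .
qed

lemma tf_f_meas[measurable]: "(\<lambda>x. tf_f a \<eta> x y) \<in> borel_measurable borel"
  unfolding tf_f_def by measurable

lemma tf_psi_meas[measurable]: "tf_psi a \<eta> l0 \<in> borel_measurable borel"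
  unfolding tf_psi_def by measurable

lemma kcoef_self:
  fixes l0 :: "'a::euclidean_space \<times> 'a"
  shows "kcoef l0 l0 = 1"
proof -
  have "kcoef l0 l0 = (\<integral>x. phi (x - fst l0) \<partial>lborel)"
    unfolding kcoef_def by (simp add: phi_sq)
  also have "\<dots> = (\<integral>x. (phi :: 'a \<Rightarrow> complex) x \<partial>lborel)"
  proof -
    have "(\<integral>x. phi (x + - fst l0) \<partial>lborel) = (\<integral>x. (phi :: 'a \<Rightarrow> complex) x \<partial>lborel)"
      by (rule integral_shift) simp
    then show ?thesis by simp
  qed
  also have "\<dots> = complex_of_real (measure lborel (cbox (0::'a) One))"
    unfolding phi_def by simp
  also have "measure lborel (cbox (0::'a) One) = 1"
    by (simp add: measure_def emeasure_lborel_cbox_eq)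
  finally show ?thesis by simp
qed

lemma exp4: "exp A * exp B * cnj (exp C * exp D) = exp (A + B + cnj C + cnj D)"
  by (simp add: exp_cnj exp_add)

lemma ext_term_L2:
  fixes f :: "'a::euclidean_space \<Rightarrow> 'a \<Rightarrow> complex"
  assumes [measurable]: "(\<lambda>x. f x y) \<in> borel_measurable borel" and L: "L2_sq (\<lambda>x. f x y) < \<infinity>"
  shows "L2_sq (\<lambda>x. ext_term a f l x y) < \<infinity>"
proof -
  define C where "C = norm (a l) * exp (- (snd l \<bullet> y))"
  have "L2_sq (\<lambda>x. ext_term a f l x y) = (\<integral>\<^sup>+x. ennreal (C\<^sup>2) * ennreal ((norm (f (x - fst l) y))\<^sup>2) \<partial>lborel)"
    unfolding L2_sq_def norm_ext_term C_def
    by (intro nn_integral_cong) (simp add: ennreal_mult[symmetric] power_mult_distrib)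
  also have "\<dots> = ennreal (C\<^sup>2) * L2_sq (\<lambda>x. f (x - fst l) y)"
    unfolding L2_sq_def by (rule nn_integral_cmult) measurable
  also have "L2_sq (\<lambda>x. f (x - fst l) y) = L2_sq (\<lambda>x. f x y)"
    by (rule L2_sq_shift[of "\<lambda>x. f x y"]) measurable
  finally show ?thesis using L by (simp add: ennreal_mult_less_top)
qed

lemma inner_ext_term:
  fixes c :: "'a::euclidean_space \<times> 'a \<Rightarrow> complex"
  shows "(\<integral>x. ext_term c (tf_f a \<eta>) l x y * cnj (tf_psi a \<eta> l0 x) \<partial>lborel)
    = c l * exp (- complex_of_real (snd l \<bullet> y)) * exp (\<i> * complex_of_real (snd l \<bullet> a - \<eta> \<bullet> fst l)) * kcoef l0 l"
proof -
  define F where "F x = ext_term c (tf_f a \<eta>) l x y * cnj (tf_psi a \<eta> l0 x)" for x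
  define K where "K = c l * exp (- complex_of_real (snd l \<bullet> y)) * exp (\<i> * complex_of_real (snd l \<bullet> a - \<eta> \<bullet> fst l))"
  have Fm: "F \<in> borel_measurable borel"
  proof -
    have [measurable]: "(\<lambda>x. ext_term c (tf_f a \<eta>) l x y) \<in> borel_measurable borel"
      by (rule ext_term_meas) simp
    show ?thesis unfolding F_def by measurable
  qed
  have ptw: "F (x + a) = K * (exp (\<i> * complex_of_real ((snd l - snd l0) \<bullet> x)) * phi (x - fst l) * phi (x - fst l0))" for x
  proof -
    define A where "A = \<i> * (complex_of_real (snd l \<bullet> (x + a)) + \<i> * complex_of_real (snd l \<bullet> y))"
    define B where "B = \<i> * complex_of_real (\<eta> \<bullet> (x + a - fst l))"
    define C where "C = \<i> * complex_of_real (\<eta> \<bullet> (x + a))"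
    define D where "D = \<i> * complex_of_real (snd l0 \<bullet> x)"
    have e1: "ext_term c (tf_f a \<eta>) l (x + a) y = c l * exp A * exp B * phi (x - fst l)"
      unfolding ext_term_def tf_f_def A_def B_def by (simp add: algebra_simps)
    have e2: "tf_psi a \<eta> l0 (x + a) = exp C * exp D * phi (x - fst l0)"
      unfolding tf_psi_def C_def D_def by (simp add: algebra_simps)
    have "F (x + a) = c l * (exp A * exp B * cnj (exp C * exp D)) * (phi (x - fst l) * phi (x - fst l0))"
      unfolding F_def e1 e2 by (simp add: mult_ac)
    also have "exp A * exp B * cnj (exp C * exp D) = exp (A + B + cnj C + cnj D)" by (rule exp4)
    also have "A + B + cnj C + cnj D = - complex_of_real (snd l \<bullet> y) + \<i> * complex_of_real (snd l \<bullet> a - \<eta> \<bullet> fst l)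
        + \<i> * complex_of_real ((snd l - snd l0) \<bullet> x)"
      unfolding A_def B_def C_def D_def
      by (simp add: inner_add_right inner_diff_right inner_diff_left algebra_simps)
    finally have X: "F (x + a) = c l * exp (- complex_of_real (snd l \<bullet> y) + \<i> * complex_of_real (snd l \<bullet> a - \<eta> \<bullet> fst l)
        + \<i> * complex_of_real ((snd l - snd l0) \<bullet> x)) * (phi (x - fst l) * phi (x - fst l0))" .
    have Y: "exp (- complex_of_real (snd l \<bullet> y) + \<i> * complex_of_real (snd l \<bullet> a - \<eta> \<bullet> fst l)
        + \<i> * complex_of_real ((snd l - snd l0) \<bullet> x))
       = exp (- complex_of_real (snd l \<bullet> y)) * exp (\<i> * complex_of_real (snd l \<bullet> a - \<eta> \<bullet> fst l))
         * exp (\<i> * complex_of_real ((snd l - snd l0) \<bullet> x))"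
      by (simp only: exp_add)
    show ?thesis unfolding X Y K_def by (simp only: mult_ac)
  qed
  have "(\<integral>x. F x \<partial>lborel) = (\<integral>x. F (x + a) \<partial>lborel)"
    by (rule integral_shift[symmetric]) (rule Fm)
  also have "\<dots> = (\<integral>x. K * (exp (\<i> * complex_of_real ((snd l - snd l0) \<bullet> x)) * phi (x - fst l) * phi (x - fst l0)) \<partial>lborel)"
    by (simp only: ptw)
  also have "\<dots> = K * kcoef l0 l"
    unfolding kcoef_def by (rule integral_mult_right_zero)
  finally show ?thesis unfolding F_def K_def .
qed

lemma norm_exp_ii: "norm (exp (\<i> * complex_of_real t)) = 1"
  by simp

lemma geo_avg:
  fixes z :: complex
  assumes "norm z = 1" "z \<noteq> 1"
  shows "(\<lambda>N. (\<Sum>n<N. z ^ n) / of_nat N) \<longlonglongrightarrow> 0"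
proof (rule Lim_null_comparison)
  have "norm ((\<Sum>n<N. z ^ n) / of_nat N) \<le> (2 / norm (1 - z)) / real N" for N
  proof -
    have "(\<Sum>n<N. z ^ n) = (1 - z ^ N) / (1 - z)"
      using assms by (simp add: sum_gp_strict)
    moreover have "norm (1 - z ^ N) \<le> 2"
      using norm_triangle_ineq4[of 1 "z ^ N"] assms by (simp add: norm_power)
    ultimately have "norm (\<Sum>n<N. z ^ n) \<le> 2 / norm (1 - z)"
      using assms by (simp add: norm_divide divide_right_mono)
    then have "norm (\<Sum>n<N. z ^ n) / real N \<le> (2 / norm (1 - z)) / real N"
      by (rule divide_right_mono) simp
    then show ?thesis by (simp add: norm_divide)
  qed
  then show "eventually (\<lambda>N. norm ((\<Sum>n<N. z ^ n) / of_nat N) \<le> (2 / norm (1 - z)) / real N) sequentially"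
    by simp
  show "(\<lambda>N. (2 / norm (1 - z)) / real N) \<longlonglongrightarrow> 0"
    by (rule lim_const_over_n)
qed

lemma coeff_extract_nat:
  fixes d :: "nat \<Rightarrow> complex" and \<theta> :: "nat \<Rightarrow> real"
  assumes ds: "summable (\<lambda>k. norm (d k))"
    and sep: "\<And>k. d k \<noteq> 0 \<Longrightarrow> k \<noteq> k0 \<Longrightarrow> exp (\<i> * complex_of_real (\<theta> k)) \<noteq> exp (\<i> * complex_of_real (\<theta> k0))"
    and bnd: "\<And>n::nat. norm (\<Sum>k. d k * exp (\<i> * of_nat n * complex_of_real (\<theta> k))) \<le> B"
  shows "norm (d k0) \<le> B"
proof -
  define z where "z k = exp (\<i> * complex_of_real (\<theta> k - \<theta> k0))" for k
  define q where "q N k = (\<Sum>n<N. (z k) ^ n) / of_nat N" for N k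
  define E where "E n k = exp (\<i> * of_nat n * complex_of_real (\<theta> k))" for n k
  have zpow: "(z k) ^ n = exp (- (\<i> * of_nat n * complex_of_real (\<theta> k0))) * E n k" for k n
  proof -
    have "(z k) ^ n = exp (of_nat n * (\<i> * complex_of_real (\<theta> k - \<theta> k0)))"
      unfolding z_def by (rule exp_of_nat_mult[symmetric])
    also have "of_nat n * (\<i> * complex_of_real (\<theta> k - \<theta> k0))
        = - (\<i> * of_nat n * complex_of_real (\<theta> k0)) + \<i> * of_nat n * complex_of_real (\<theta> k)"
      by (simp add: algebra_simps)
    finally show ?thesis unfolding E_def by (simp only: exp_add)
  qed
  have normz: "norm (z k) = 1" for k unfolding z_def by simp
  have normE: "norm (E n k) = 1" for n k unfolding E_def by simp
  have sumE: "summable (\<lambda>k. d k * E n k)" for n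
    by (rule summable_norm_cancel, rule summable_comparison_test[OF _ ds]) (simp add: norm_mult normE)
  have qbound: "norm (q N k) \<le> 1" if "N > 0" for N k
  proof -
    have "norm (\<Sum>n<N. (z k) ^ n) \<le> (\<Sum>n<N. norm ((z k) ^ n))" by (rule norm_sum)
    also have "\<dots> = of_nat N" by (simp add: norm_power normz)
    finally show ?thesis unfolding q_def using that by (simp add: norm_divide)
  qed
  have q0: "q N k0 = 1" if "N > 0" for N
    unfolding q_def z_def using that by simp
  define A where "A N = (\<Sum>k. d k * q N k)" for N
  have A_eq: "A N = (\<Sum>n<N. exp (- (\<i> * of_nat n * complex_of_real (\<theta> k0))) * (\<Sum>k. d k * E n k)) / of_nat N" for N
  proof -
    have "A N = (\<Sum>k. (\<Sum>n<N. exp (- (\<i> * of_nat n * complex_of_real (\<theta> k0))) * (d k * E n k)) / of_nat N)"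
      unfolding A_def q_def zpow by (simp add: sum_distrib_left mult_ac)
    also have "\<dots> = (\<Sum>k. \<Sum>n<N. exp (- (\<i> * of_nat n * complex_of_real (\<theta> k0))) * (d k * E n k)) / of_nat N"
      by (rule suminf_divide) (intro summable_sum summable_mult sumE)
    also have "(\<Sum>k. \<Sum>n<N. exp (- (\<i> * of_nat n * complex_of_real (\<theta> k0))) * (d k * E n k))
        = (\<Sum>n<N. \<Sum>k. exp (- (\<i> * of_nat n * complex_of_real (\<theta> k0))) * (d k * E n k))"
      by (rule suminf_sum) (intro summable_mult sumE)
    also have "\<dots> = (\<Sum>n<N. exp (- (\<i> * of_nat n * complex_of_real (\<theta> k0))) * (\<Sum>k. d k * E n k))"
      by (intro sum.cong refl suminf_mult sumE)
    finally show ?thesis .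
  qed
  have Abound: "norm (A N) \<le> B" if "N > 0" for N
  proof -
    have "norm (\<Sum>n<N. exp (- (\<i> * of_nat n * complex_of_real (\<theta> k0))) * (\<Sum>k. d k * E n k))
        \<le> (\<Sum>n<N. norm (exp (- (\<i> * of_nat n * complex_of_real (\<theta> k0))) * (\<Sum>k. d k * E n k)))"
      by (rule norm_sum)
    also have "\<dots> \<le> (\<Sum>n<N. B)"
    proof (rule sum_mono)
      fix n
      have "norm (exp (- (\<i> * of_nat n * complex_of_real (\<theta> k0)))) = 1" by simp
      then show "norm (exp (- (\<i> * of_nat n * complex_of_real (\<theta> k0))) * (\<Sum>k. d k * E n k)) \<le> B"
        using bnd[of n] unfolding E_def by (simp add: norm_mult)
    qed
    also have "\<dots> = of_nat N * B" by simp
    finally show ?thesis unfolding A_eq using that by (simp add: norm_divide field_simps)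
  qed
  have lim: "A \<longlonglongrightarrow> (\<Sum>k. if k = k0 then d k0 else 0)"
    unfolding A_def
  proof (rule tannerys_theorem[THEN conjunct2, THEN conjunct2, of _ _ _ "\<lambda>k. norm (d k)"])
    fix k
    show "(\<lambda>N. d k * q N k) \<longlonglongrightarrow> (if k = k0 then d k0 else 0)"
    proof (cases "k = k0")
      case True
      have "eventually (\<lambda>N. d k * q N k = d k0) sequentially"
        using eventually_gt_at_top[of 0] by eventually_elim (simp add: True q0)
      then show ?thesis using True by (simp add: tendsto_eventually)
    next
      case False
      show ?thesis
      proof (cases "d k = 0")
        case True then show ?thesis using False by simp
      next
        case dk: False
        have "z k \<noteq> 1"
        proof
          assume "z k = 1"
          then have "exp (\<i> * complex_of_real (\<theta> k)) = exp (\<i> * complex_of_real (\<theta> k0))"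
            unfolding z_def by (simp add: algebra_simps exp_diff)
          then show False using sep[OF dk False] by simp
        qed
        then have "(\<lambda>N. q N k) \<longlonglongrightarrow> 0" unfolding q_def by (intro geo_avg normz)
        then have "(\<lambda>N. d k * q N k) \<longlonglongrightarrow> d k * 0" by (intro tendsto_mult tendsto_const)
        then show ?thesis using False by simp
      qed
    qed
  next
    show "eventually (\<lambda>(k, N). norm (d k * q N k) \<le> norm (d k)) (at_top \<times>\<^sub>F sequentially)"
    proof -
      have "eventually (\<lambda>(k::nat, N). (N::nat) > 0) (at_top \<times>\<^sub>F sequentially)"
        unfolding eventually_prod_filter
        by (intro exI[of _ "\<lambda>_. True"] exI[of _ "\<lambda>N. N > 0"]) (auto intro: eventually_gt_at_top)
      then show ?thesis
        by eventually_elim (auto simp: norm_mult intro!: mult_left_le qbound)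
    qed
  qed (use ds in auto)
  have "(\<Sum>k. if k = k0 then d k0 else 0) = d k0"
    by (subst suminf_finite[of "{k0}"]) auto
  with lim have "A \<longlonglongrightarrow> d k0" by simp
  then have "(\<lambda>N. norm (A N)) \<longlonglongrightarrow> norm (d k0)" by (rule tendsto_norm)
  then show ?thesis
    by (rule LIMSEQ_le_const2) (auto intro!: exI[of _ 1] Abound)
qed

lemma good_direction:
  fixes S :: "('a::euclidean_space \<times> 'a) set" and l0 :: "'a \<times> 'a"
  assumes "countable S"
  obtains a0 \<eta>0 :: 'a where
    "\<And>l. l \<in> S \<Longrightarrow> l \<noteq> l0 \<Longrightarrow>
       exp (\<i> * complex_of_real (snd l \<bullet> a0 - \<eta>0 \<bullet> fst l)) \<noteq> exp (\<i> * complex_of_real (snd l0 \<bullet> a0 - \<eta>0 \<bullet> fst l0))"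
proof -
  define b where "b l = (snd l - snd l0, fst l0 - fst l)" for l :: "'a \<times> 'a"
  define H where "H p = {z :: 'a \<times> 'a. b (fst p) \<bullet> z = 2 * pi * of_int (snd p)}" for p :: "('a \<times> 'a) \<times> int"
  define Bad where "Bad = \<Union>(H ` ((S - {l0}) \<times> UNIV))"
  have bnz: "b l \<noteq> 0" if "l \<noteq> l0" for l
    using that unfolding b_def by (auto simp: prod_eq_iff)
  have "negligible Bad" unfolding Bad_def
  proof (rule negligible_countable_Union)
    show "countable (H ` ((S - {l0}) \<times> UNIV))" using assms by auto
  next
    fix X assume "X \<in> H ` ((S - {l0}) \<times> UNIV)"
    then obtain l k where lk: "l \<in> S - {l0}" "X = H (l, k)" by auto
    show "negligible X" unfolding lk H_def using bnz[of l] lk(1)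
      by (intro negligible_hyperplane) auto
  qed
  then have "Bad \<noteq> UNIV" using non_negligible_UNIV by metis
  then obtain z where z: "z \<notin> Bad" by auto
  show ?thesis
  proof (rule that[of "fst z" "snd z"])
    fix l assume l: "l \<in> S" "l \<noteq> l0"
    show "exp (\<i> * complex_of_real (snd l \<bullet> fst z - snd z \<bullet> fst l)) \<noteq> exp (\<i> * complex_of_real (snd l0 \<bullet> fst z - snd z \<bullet> fst l0))"
    proof
      assume "exp (\<i> * complex_of_real (snd l \<bullet> fst z - snd z \<bullet> fst l)) = exp (\<i> * complex_of_real (snd l0 \<bullet> fst z - snd z \<bullet> fst l0))"
      then obtain n :: int where n: "\<i> * complex_of_real (snd l \<bullet> fst z - snd z \<bullet> fst l) = \<i> * complex_of_real (snd l0 \<bullet> fst z - snd z \<bullet> fst l0) + (of_int (2 * n) * pi) * \<i>"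
        unfolding exp_eq by blast
      then have "Im (\<i> * complex_of_real (snd l \<bullet> fst z - snd z \<bullet> fst l)) = Im (\<i> * complex_of_real (snd l0 \<bullet> fst z - snd z \<bullet> fst l0) + (of_int (2 * n) * pi) * \<i>)"
        by simp
      then have "snd l \<bullet> fst z - snd z \<bullet> fst l = snd l0 \<bullet> fst z - snd z \<bullet> fst l0 + 2 * pi * of_int n"
        by simp
      then have "b l \<bullet> z = 2 * pi * of_int n"
        unfolding b_def by (cases z) (simp add: inner_diff_left inner_diff_right inner_commute algebra_simps)
      then have "z \<in> H (l, n)" unfolding H_def by simp
      then have "z \<in> Bad" unfolding Bad_def using l by blast
      then show False using z by simp
    qed
  qed
qed

lemma inX_tf_f:
  assumes "0 \<le> \<rho>"
  shows "in_X \<rho> (tf_f a \<eta>)" and "L2inf_sq \<rho> (tf_f a \<eta>) = 1"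
proof -
  show L: "L2inf_sq \<rho> (tf_f a \<eta>) = 1"
    unfolding L2inf_sq_def tf_f_L2 using assms by (simp add: SUP_const)
  show "in_X \<rho> (tf_f a \<eta>)"
    unfolding in_X_def L by simp
qed

lemma term_eq:
  fixes c :: "'a::euclidean_space \<times> 'a \<Rightarrow> complex"
  shows "(\<integral>x. ext_term c (tf_f (of_nat n *\<^sub>R a0) (of_nat n *\<^sub>R \<eta>0)) l x y * cnj (tf_psi (of_nat n *\<^sub>R a0) (of_nat n *\<^sub>R \<eta>0) l0 x) \<partial>lborel)
    = (c l * exp (- complex_of_real (snd l \<bullet> y)) * kcoef l0 l) * exp (\<i> * of_nat n * complex_of_real (snd l \<bullet> a0 - \<eta>0 \<bullet> fst l))"
proof -
  have "snd l \<bullet> (of_nat n *\<^sub>R a0) - (of_nat n *\<^sub>R \<eta>0) \<bullet> fst l = of_nat n * (snd l \<bullet> a0 - \<eta>0 \<bullet> fst l)"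
    by (simp add: algebra_simps)
  then show ?thesis unfolding inner_ext_term by (simp add: mult_ac)
qed

lemma part2_key:
  fixes c :: "('a::euclidean_space \<times> 'a) \<Rightarrow> complex"
  assumes cnt: "countable {l. c l \<noteq> 0}" and M: "0 < M" and \<rho>: "0 < \<rho>"
    and H: "extends_bounded \<rho> c M"
    and l0: "c l0 \<noteq> 0" and w0: "snd l0 \<noteq> 0"
  shows "norm (c l0) * exp (\<rho> * norm (snd l0)) \<le> M"
proof -
  obtain e :: "nat \<Rightarrow> 'a \<times> 'a" where e: "inj e" "{l. c l \<noteq> 0} \<subseteq> range e"
    using countable_enum[OF cnt] by blast
  have zero: "\<And>l. l \<notin> range e \<Longrightarrow> c l = 0" using e by auto
  obtain a0 \<eta>0 :: 'a where sep0:
    "\<And>l. l \<in> {l. c l \<noteq> 0} \<Longrightarrow> l \<noteq> l0 \<Longrightarrow>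
       exp (\<i> * complex_of_real (snd l \<bullet> a0 - \<eta>0 \<bullet> fst l)) \<noteq> exp (\<i> * complex_of_real (snd l0 \<bullet> a0 - \<eta>0 \<bullet> fst l0))"
    using good_direction[OF cnt] by blast
  define y where "y = (- (\<rho> / norm (snd l0))) *\<^sub>R snd l0"
  have ny: "norm y = \<rho>" unfolding y_def using w0 \<rho> by simp
  have y: "y \<in> cball 0 \<rho>" using ny by simp
  have wy: "snd l0 \<bullet> y = - (\<rho> * norm (snd l0))"
    unfolding y_def using w0 by (simp add: power2_norm_eq_inner[symmetric] power2_eq_square)
  define \<theta> where "\<theta> l = snd l \<bullet> a0 - \<eta>0 \<bullet> fst l" for l :: "'a \<times> 'a"
  define d where "d l = c l * exp (- complex_of_real (snd l \<bullet> y)) * kcoef l0 l" for l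
  have main: "((\<lambda>l. d l * exp (\<i> * of_nat n * complex_of_real (\<theta> l))) has_sum Z) UNIV \<and> norm Z \<le> M"
    if "Z = (\<integral>x. g x y * cnj (tf_psi (of_nat n *\<^sub>R a0) (of_nat n *\<^sub>R \<eta>0) l0 x) \<partial>lborel)"
       "in_X \<rho> g" "L2_has_sum (\<lambda>l x. ext_term c (tf_f (of_nat n *\<^sub>R a0) (of_nat n *\<^sub>R \<eta>0)) l x y) (\<lambda>x. g x y)"
       "L2inf_sq \<rho> g \<le> ennreal (M\<^sup>2) * L2inf_sq \<rho> (tf_f (of_nat n *\<^sub>R a0) (of_nat n *\<^sub>R \<eta>0))"
     for n g Z
  proof -
    define a where "a = (of_nat n *\<^sub>R a0 :: 'a)"
    define \<eta> where "\<eta> = (of_nat n *\<^sub>R \<eta>0 :: 'a)"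
    note defs = a_def[symmetric] \<eta>_def[symmetric]
    have gm: "(\<lambda>x. g x y) \<in> borel_measurable borel"
      using that(2) y unfolding in_X_def by simp
    have gL: "L2_sq (\<lambda>x. g x y) \<le> ennreal (M\<^sup>2)"
    proof -
      have "L2_sq (\<lambda>x. g x y) \<le> L2inf_sq \<rho> g"
        unfolding L2inf_sq_def using y by (rule SUP_upper)
      also have "\<dots> \<le> ennreal (M\<^sup>2)"
      proof -
        have "L2inf_sq \<rho> (tf_f (of_nat n *\<^sub>R a0) (of_nat n *\<^sub>R \<eta>0)) = 1"
          by (rule inX_tf_f(2)) (use \<rho> in simp)
        then show ?thesis using that(4) by simp
      qed
      finally show ?thesis .
    qed
    have gL': "L2_sq (\<lambda>x. g x y) < \<infinity>"
      using gL by (rule le_less_trans) simp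
    have um: "(\<lambda>x. ext_term c (tf_f a \<eta>) l x y) \<in> borel_measurable borel" for l
      by (rule ext_term_meas) simp
    have uL: "L2_sq (\<lambda>x. ext_term c (tf_f a \<eta>) l x y) < \<infinity>" for l
      by (rule ext_term_L2) (simp_all add: tf_f_L2)
    have hs: "((\<lambda>l. \<integral>x. ext_term c (tf_f a \<eta>) l x y * cnj (tf_psi a \<eta> l0 x) \<partial>lborel) has_sum Z) UNIV"
      unfolding that(1) defs
      by (rule L2_has_sum_inner[OF that(3)[unfolded defs] um uL gm gL']) (simp_all add: tf_psi_L2)
    then have hs': "((\<lambda>l. d l * exp (\<i> * of_nat n * complex_of_real (\<theta> l))) has_sum Z) UNIV"
      unfolding a_def \<eta>_def term_eq d_def \<theta>_def .
    have "ennreal (2 * norm Z) \<le> ennreal (1/M) * L2_sq (\<lambda>x. g x y) + ennreal M * L2_sq (tf_psi a \<eta> l0)"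
      unfolding that(1) defs by (rule inner_bound(2)) (use gm gL' M in \<open>simp_all add: tf_psi_L2\<close>)
    also have "\<dots> \<le> ennreal (1/M) * ennreal (M\<^sup>2) + ennreal M"
      using gL by (simp add: tf_psi_L2 mult_left_mono)
    also have "ennreal (1/M) * ennreal (M\<^sup>2) + ennreal M = ennreal (2 * M)"
    proof -
      have "ennreal (1/M) * ennreal (M\<^sup>2) = ennreal (1/M * M\<^sup>2)"
        by (rule ennreal_mult[symmetric]) (use M in auto)
      also have "1/M * M\<^sup>2 = M" using M by (simp add: power2_eq_square)
      finally show ?thesis using M by (simp add: ennreal_plus[symmetric] del: ennreal_plus)
    qed
    finally have "2 * norm Z \<le> 2 * M"
      by (rule ennreal_le_iff[THEN iffD1, rotated]) (use M in auto)
    then show ?thesis using hs' by simp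
  qed
  define Zs where "Zs n = (SOME Z. ((\<lambda>l. d l * exp (\<i> * of_nat n * complex_of_real (\<theta> l))) has_sum Z) UNIV \<and> norm Z \<le> M)" for n :: nat
  have Zs: "((\<lambda>l. d l * exp (\<i> * of_nat n * complex_of_real (\<theta> l))) has_sum Zs n) UNIV \<and> norm (Zs n) \<le> M" for n
  proof -
    have "in_X \<rho> (tf_f (of_nat n *\<^sub>R a0) (of_nat n *\<^sub>R \<eta>0))" by (rule inX_tf_f(1)) (use \<rho> in simp)
    then obtain g where g: "in_X \<rho> g" "\<forall>y\<in>cball 0 \<rho>. L2_has_sum (\<lambda>l x. ext_term c (tf_f (of_nat n *\<^sub>R a0) (of_nat n *\<^sub>R \<eta>0)) l x y) (\<lambda>x. g x y)"
      "L2inf_sq \<rho> g \<le> ennreal (M\<^sup>2) * L2inf_sq \<rho> (tf_f (of_nat n *\<^sub>R a0) (of_nat n *\<^sub>R \<eta>0))"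
      using H unfolding extends_bounded_def by blast
    have "\<exists>Z. ((\<lambda>l. d l * exp (\<i> * of_nat n * complex_of_real (\<theta> l))) has_sum Z) UNIV \<and> norm Z \<le> M"
      using main[OF refl g(1) g(2)[rule_format, OF y] g(3)] by blast
    then show ?thesis unfolding Zs_def by (rule someI_ex)
  qed
  have dz: "\<And>l. l \<notin> range e \<Longrightarrow> d l = 0" using zero unfolding d_def by simp
  have sums: "(\<lambda>k. d (e k) * exp (\<i> * of_nat n * complex_of_real (\<theta> (e k)))) sums Zs n" for n
    using Zs[of n] has_sum_enum[OF e(1), of "\<lambda>l. d l * exp (\<i> * of_nat n * complex_of_real (\<theta> l))"] dz
    by (auto intro: has_sum_imp_sums)
  have abs: "summable (\<lambda>k. norm (d (e k)))"
  proof -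
    have "d summable_on UNIV" using Zs[of 0] by (auto simp: summable_on_def)
    then have "(\<lambda>l. norm (d l)) summable_on UNIV"
      using summable_on_iff_abs_summable_on_complex by blast
    then have "((\<lambda>l. norm (d l)) has_sum (\<Sum>\<^sub>\<infinity>l. norm (d l))) UNIV" by (rule has_sum_infsum)
    then have "((\<lambda>k. norm (d (e k))) has_sum (\<Sum>\<^sub>\<infinity>l. norm (d l))) UNIV"
      using has_sum_enum[OF e(1), of "\<lambda>l. norm (d l)"] dz by auto
    then show ?thesis using has_sum_imp_sums sums_summable by blast
  qed
  obtain k0 where k0: "e k0 = l0" using e l0 by blast
  have "norm (d (e k0)) \<le> M"
  proof (rule coeff_extract_nat[where \<theta> = "\<lambda>k. \<theta> (e k)"])
    show "summable (\<lambda>k. norm (d (e k)))" by (rule abs)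
  next
    fix k assume dk: "d (e k) \<noteq> 0" and kk: "k \<noteq> k0"
    have "c (e k) \<noteq> 0" using dk unfolding d_def by auto
    moreover have "e k \<noteq> l0" using kk k0 e(1) by (auto dest: injD)
    ultimately show "exp (\<i> * complex_of_real (\<theta> (e k))) \<noteq> exp (\<i> * complex_of_real (\<theta> (e k0)))"
      unfolding \<theta>_def k0 using sep0 by blast
  next
    fix n :: nat
    show "norm (\<Sum>k. d (e k) * exp (\<i> * of_nat n * complex_of_real (\<theta> (e k)))) \<le> M"
      using sums_unique[OF sums[of n]] Zs[of n] by simp
  qed
  moreover have "norm (d (e k0)) = norm (c l0) * exp (\<rho> * norm (snd l0))"
    unfolding k0 d_def kcoef_self wy by (simp add: norm_mult)
  ultimately show ?thesis by simp
qed

lemma part2: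
  fixes c :: "('a::euclidean_space \<times> 'a) \<Rightarrow> complex"
  assumes A: "in_algebra_A c" and C: "0 < C" and \<Omega>: "0 \<le> \<Omega>"
    and H: "\<forall>\<rho>>0. extends_bounded \<rho> c (C * exp (\<rho> * \<Omega>))"
  shows "tf_supp c \<subseteq> UNIV \<times> cball 0 \<Omega>"
proof
  fix l assume "l \<in> tf_supp c"
  then have cl: "c l \<noteq> 0" unfolding tf_supp_def by simp
  have "countable {x \<in> UNIV. norm (c x) \<noteq> 0}"
    using A unfolding in_algebra_A_def by (rule summable_countable_real)
  then have cnt: "countable {l. c l \<noteq> 0}" by simp
  have "norm (snd l) \<le> \<Omega>"
  proof (rule ccontr)
    assume "\<not> norm (snd l) \<le> \<Omega>"
    then have big: "\<Omega> < norm (snd l)" by simp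
    then have w0: "snd l \<noteq> 0" using \<Omega> by auto
    define \<delta> where "\<delta> = norm (snd l) - \<Omega>"
    have \<delta>: "0 < \<delta>" unfolding \<delta>_def using big by simp
    have key: "norm (c l) * exp (\<rho> * \<delta>) \<le> C" if \<rho>: "0 < \<rho>" for \<rho>
    proof -
      have "norm (c l) * exp (\<rho> * norm (snd l)) \<le> C * exp (\<rho> * \<Omega>)"
        by (rule part2_key[OF cnt _ \<rho> H[rule_format, OF \<rho>] cl w0]) (use C in simp)
      moreover have "exp (\<rho> * norm (snd l)) = exp (\<rho> * \<Omega>) * exp (\<rho> * \<delta>)"
        unfolding \<delta>_def by (simp add: exp_add[symmetric] algebra_simps)
      ultimately have "(norm (c l) * exp (\<rho> * \<delta>)) * exp (\<rho> * \<Omega>) \<le> C * exp (\<rho> * \<Omega>)"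
        by (simp add: mult_ac)
      then show ?thesis by simp
    qed
    define \<rho> where "\<rho> = max 1 ((ln C - ln (norm (c l)) + 1) / \<delta>)"
    have \<rho>0: "0 < \<rho>" unfolding \<rho>_def by simp
    have "ln C - ln (norm (c l)) + 1 \<le> \<rho> * \<delta>"
    proof -
      have "(ln C - ln (norm (c l)) + 1) / \<delta> \<le> \<rho>" unfolding \<rho>_def by simp
      then show ?thesis using \<delta> by (simp add: divide_le_eq)
    qed
    then have e2: "exp (ln C - ln (norm (c l)) + 1) \<le> exp (\<rho> * \<delta>)" by simp
    have e0: "exp (ln C - ln (norm (c l))) = C / norm (c l)"
      using C cl by (simp add: exp_diff)
    have e1: "exp (ln C - ln (norm (c l))) < exp (ln C - ln (norm (c l)) + 1)" by simp
    have "C / norm (c l) < exp (\<rho> * \<delta>)"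
      using less_le_trans[OF e1 e2] unfolding e0 .
    then have "C < norm (c l) * exp (\<rho> * \<delta>)" using cl by (simp add: divide_less_eq mult.commute)
    with key[OF \<rho>0] show False by simp
  qed
  then show "l \<in> UNIV \<times> cball 0 \<Omega>" by (cases l) simp
qed

definition sig :: "'a \<times> 'a \<Rightarrow> 'a::euclidean_space \<times> 'a" where
  "sig l = (snd l, - fst l)"

lemma bij_sig: "bij_betw (sig :: 'a::euclidean_space \<times> 'a \<Rightarrow> _) UNIV UNIV"
  by (rule bij_betwI[of sig UNIV UNIV "\<lambda>l. (- snd l, fst l)"])
     (auto simp: sig_def prod_eq_iff)

lemma fcc_norm: "norm (fourier_conj_coeffs c l) = norm (c (sig l))"
  unfolding fourier_conj_coeffs_def sig_def by (simp add: norm_mult)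

lemma fcc_algebra:
  fixes c :: "('a::euclidean_space \<times> 'a) \<Rightarrow> complex"
  assumes "in_algebra_A c"
  shows "in_algebra_A (fourier_conj_coeffs c)" and "A_norm (fourier_conj_coeffs c) = A_norm c"
proof -
  show "in_algebra_A (fourier_conj_coeffs c)"
    using assms unfolding in_algebra_A_def fcc_norm
    by (subst summable_on_reindex_bij_betw[OF bij_sig, of "\<lambda>l. norm (c l)"])
  show "A_norm (fourier_conj_coeffs c) = A_norm c"
    unfolding A_norm_def fcc_norm
    by (rule infsum_reindex_bij_betw[OF bij_sig, of "\<lambda>l. norm (c l)"])
qed

lemma fcc_nz: "fourier_conj_coeffs c l \<noteq> 0 \<longleftrightarrow> c (sig l) \<noteq> 0"
  using fcc_norm[of c l] by (metis norm_eq_zero)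

theorem theorem7:
  fixes c :: "('a::euclidean_space \<times> 'a) \<Rightarrow> complex"
  assumes "in_algebra_A c"
  shows "(\<forall>\<Omega>>0. tf_supp c \<subseteq> UNIV \<times> cball 0 \<Omega> \<longrightarrow>
            (\<forall>\<rho>>0. extends_bounded \<rho> c (A_norm c * exp (\<rho> * \<Omega>))))
       \<and> (\<forall>C>0. \<forall>\<Omega>>0. (\<forall>\<rho>>0. extends_bounded \<rho> c (C * exp (\<rho> * \<Omega>))) \<longrightarrow>
            tf_supp c \<subseteq> UNIV \<times> cball 0 \<Omega>)
       \<and> (\<forall>D>0. tf_supp c \<subseteq> cball 0 D \<times> UNIV \<longrightarrow>
            (\<forall>\<rho>>0. extends_bounded \<rho> (fourier_conj_coeffs c) (A_norm c * exp (\<rho> * D))))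
       \<and> (\<forall>C>0. \<forall>D>0. (\<forall>\<rho>>0. extends_bounded \<rho> (fourier_conj_coeffs c) (C * exp (\<rho> * D))) \<longrightarrow>
            tf_supp c \<subseteq> cball 0 D \<times> UNIV)"
proof (intro conjI allI impI)
  fix \<Omega> \<rho> :: real assume \<Omega>: "0 < \<Omega>" and S: "tf_supp c \<subseteq> UNIV \<times> cball 0 \<Omega>" and "0 < \<rho>"
  have supp: "\<And>l. c l \<noteq> 0 \<Longrightarrow> norm (snd l) \<le> \<Omega>"
    using S unfolding tf_supp_def by (auto simp: subset_iff)
  show "extends_bounded \<rho> c (A_norm c * exp (\<rho> * \<Omega>))"
    by (rule part1[OF assms supp less_imp_le[OF \<Omega>]])
next
  fix C \<Omega> :: real assume "0 < C" "0 < \<Omega>" "\<forall>\<rho>>0. extends_bounded \<rho> c (C * exp (\<rho> * \<Omega>))"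
  then show "tf_supp c \<subseteq> UNIV \<times> cball 0 \<Omega>"
    by (intro part2[OF assms]) auto
next
  fix D \<rho> :: real assume D: "0 < D" and S: "tf_supp c \<subseteq> cball 0 D \<times> UNIV" and "0 < \<rho>"
  have supp: "\<And>l. fourier_conj_coeffs c l \<noteq> 0 \<Longrightarrow> norm (snd l) \<le> D"
  proof -
    fix l assume "fourier_conj_coeffs c l \<noteq> 0"
    then have "sig l \<in> tf_supp c" unfolding fcc_nz tf_supp_def by simp
    then show "norm (snd l) \<le> D" using S by (auto simp: sig_def)
  qed
  have "extends_bounded \<rho> (fourier_conj_coeffs c) (A_norm (fourier_conj_coeffs c) * exp (\<rho> * D))"
    by (rule part1[OF fcc_algebra(1)[OF assms] supp less_imp_le[OF D]])
  then show "extends_bounded \<rho> (fourier_conj_coeffs c) (A_norm c * exp (\<rho> * D))"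
    unfolding fcc_algebra(2)[OF assms] .
next
  fix C D :: real assume "0 < C" "0 < D" "\<forall>\<rho>>0. extends_bounded \<rho> (fourier_conj_coeffs c) (C * exp (\<rho> * D))"
  then have S: "tf_supp (fourier_conj_coeffs c) \<subseteq> UNIV \<times> cball 0 D"
    by (intro part2[OF fcc_algebra(1)[OF assms]]) auto
  show "tf_supp c \<subseteq> cball 0 D \<times> UNIV"
  proof
    fix l assume "l \<in> tf_supp c"
    then have "(- snd l, fst l) \<in> tf_supp (fourier_conj_coeffs c)"
      unfolding tf_supp_def by (simp add: fcc_nz sig_def)
    then show "l \<in> cball 0 D \<times> UNIV" using S by (cases l) auto
  qed
qed

end
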